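(* Suppose $\sum_{r:\rho_r\le 1/(4k^2)}\rho_r(1-\rho_r)^k\ge\frac{1-\tau}{2}$. For every $\Delta\in(0,1)$, if $N\ge 12k^2\ln(2R/\Delta)+\frac{16\ln(2/\Delta)}{1-\tau}$, then with probability at least $1-\Delta$, $1-\widehat\tau\ge\frac{1-\tau}{8}$.
   Context: Let $R\ge 2$ be an integer and $\rho=(\rho_1,\dots,\rho_R)$ a probability vector with $\rho_r>0$ for all $r$. Let $Y_1,\dots,Y_N$ be i.i.d. labels with $\mathbb P(Y_j=r)=\rho_r$, $N_r=|\{j:Y_j=r\}|$, $\widehat\rho_r=N_r/N$. Fix an integer $k\ge1$. Set $\tau:=1-\sum_{r}\rho_r(1-\rho_r)^k$ and $\widehat\tau:=1-\sum_r\widehat\rho_r(1-\widehat\rho_r)^k$. *)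

theory Defs
  imports "HOL-Probability.Probability"
begin

text \<open>Labels take values in {0..<R}; the label distribution is a pmf p with
  rho r = pmf p r. Samples Y_0,...,Y_{N-1} are i.i.d. p, modelled by Pi_pmf.\<close>

definition tau :: "nat \<Rightarrow> nat \<Rightarrow> (nat \<Rightarrow> real) \<Rightarrow> real" where
  "tau R k rho = 1 - (\<Sum>r<R. rho r * (1 - rho r) ^ k)"

definition rho_hat :: "nat \<Rightarrow> (nat \<Rightarrow> nat) \<Rightarrow> nat \<Rightarrow> real" where
  "rho_hat N Y r = real (card {j\<in>{..<N}. Y j = r}) / real N"

definition tau_hat :: "nat \<Rightarrow> nat \<Rightarrow> nat \<Rightarrow> (nat \<Rightarrow> nat) \<Rightarrow> real" where
  "tau_hat R k N Y = tau R k (rho_hat N Y)"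

end

theory Submission
  imports Defs
begin


lemma ln2_le: "ln (2::real) \<le> 3/4"
proof -
  have "1 + 3/4 + (3/4::real)^2/2 \<le> exp (3/4)" by (rule exp_lower_Taylor_quadratic) simp
  hence "2 \<le> exp (3/4::real)" by (simp add: power2_eq_square)
  thus ?thesis by (metis exp_gt_zero ln_exp ln_le_cancel_iff zero_less_numeral)
qed

lemma chernoff_lower:
  fixes n :: nat and q :: real
  assumes q: "0 \<le> q" "q \<le> 1"
  shows "measure_pmf.prob (binomial_pmf n q) {x. real x \<le> n * q / 2} \<le> exp (- (n * q / 8))"
proof -
  define a where "a = n * q / 2"
  define A where "A = {x. real x \<le> a}"
  have finA: "finite A" unfolding A_def
    by (rule finite_subset[of _ "{..nat \<lceil>a\<rceil>}"]) (auto, linarith)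
  have "measure_pmf.prob (binomial_pmf n q) A = (\<Sum>x\<in>A. pmf (binomial_pmf n q) x)"
    by (rule measure_measure_pmf_finite[OF finA])
  also have "\<dots> = (\<Sum>x\<in>A \<inter> {..n}. pmf (binomial_pmf n q) x)"
    using q by (intro sum.mono_neutral_right finA) (auto simp: pmf_binomial)
  also have "\<dots> \<le> (\<Sum>x\<in>A \<inter> {..n}. pmf (binomial_pmf n q) x * 2 powr (a - real x))"
  proof (intro sum_mono)
    fix x assume "x \<in> A \<inter> {..n}"
    hence "1 \<le> 2 powr (a - real x)" unfolding A_def by (simp add: ge_one_powr_ge_zero)
    thus "pmf (binomial_pmf n q) x \<le> pmf (binomial_pmf n q) x * 2 powr (a - real x)"
      by (simp add: mult_le_cancel_left1)
  qed
  also have "\<dots> \<le> (\<Sum>x\<le>n. pmf (binomial_pmf n q) x * 2 powr (a - real x))"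
    by (intro sum_mono2) auto
  also have "\<dots> = (\<Sum>x\<le>n. 2 powr a * (real (n choose x) * (q/2) ^ x * (1 - q) ^ (n - x)))"
  proof (intro sum.cong refl)
    fix x assume "x \<in> {..n}"
    have "2 powr (a - real x) = 2 powr a / 2 ^ x" by (simp add: powr_diff powr_realpow)
    thus "pmf (binomial_pmf n q) x * 2 powr (a - real x) = 2 powr a * (real (n choose x) * (q/2) ^ x * (1 - q) ^ (n - x))"
      using q by (simp add: pmf_binomial power_divide)
  qed
  also have "\<dots> = 2 powr a * (q/2 + (1 - q)) ^ n"
    by (subst binomial_ring) (simp add: sum_distrib_left)
  also have "\<dots> \<le> exp (ln 2 * a) * exp (- q/2) ^ n"
  proof (intro mult_mono power_mono)
    show "2 powr a \<le> exp (ln 2 * a)" by (simp add: powr_def mult.commute)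
    show "q / 2 + (1 - q) \<le> exp (- q / 2)" using exp_ge_add_one_self[of "-q/2"] by simp
  qed (use q in auto)
  also have "\<dots> = exp (ln 2 * a - n * q / 2)"
  proof -
    have "exp (- q/2) ^ n = exp (- (n * q / 2))" by (simp add: exp_of_nat_mult[symmetric])
    thus ?thesis by (simp add: exp_add[symmetric])
  qed
  also have "\<dots> \<le> exp (- (n * q / 8))"
  proof -
    have "ln 2 * a \<le> 3/4 * a" using ln2_le q by (intro mult_right_mono) (auto simp: a_def)
    hence "ln 2 * a - n * q / 2 \<le> - (n * q / 8)" unfolding a_def by linarith
    thus ?thesis by simp
  qed
  finally show ?thesis by (simp add: A_def a_def)
qed

lemma bernoulli_map: "bernoulli_pmf (measure_pmf.prob p A) = map_pmf (\<lambda>y. y \<in> A) p"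
proof (rule pmf_eqI)
  fix b :: bool
  show "pmf (bernoulli_pmf (measure_pmf.prob p A)) b = pmf (map_pmf (\<lambda>y. y \<in> A) p) b"
  proof (cases b)
    case True
    have "(\<lambda>y. y \<in> A) -` {True} = A" by auto
    thus ?thesis using True by (simp add: pmf_map)
  next
    case False
    have "(\<lambda>y. y \<in> A) -` {False} = UNIV - A" by auto
    moreover have "measure_pmf.prob p (UNIV - A) = 1 - measure_pmf.prob p A"
      using measure_pmf.prob_compl[of A p] by simp
    ultimately show ?thesis using False by (simp add: pmf_map)
  qed
qed

lemma count_binomial:
  "map_pmf (\<lambda>Y. card {j\<in>{..<N}. Y j \<in> A}) (Pi_pmf {..<N} d (\<lambda>_. p))
     = binomial_pmf N (measure_pmf.prob p A)"
proof -
  have "binomial_pmf N (measure_pmf.prob p A) =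
    map_pmf (\<lambda>f. card {x\<in>{..<N}. f x}) (Pi_pmf {..<N} (d \<in> A) (\<lambda>_. bernoulli_pmf (measure_pmf.prob p A)))"
    by (rule binomial_pmf_altdef') auto
  also have "\<dots> = map_pmf (\<lambda>f. card {x\<in>{..<N}. f x}) (Pi_pmf {..<N} (d \<in> A) (\<lambda>_. map_pmf (\<lambda>y. y \<in> A) p))"
    by (simp add: bernoulli_map)
  also have "\<dots> = map_pmf (\<lambda>f. card {x\<in>{..<N}. f x}) (map_pmf (\<lambda>h. (\<lambda>y. y \<in> A) \<circ> h) (Pi_pmf {..<N} d (\<lambda>_. p)))"
    by (subst Pi_pmf_map) auto
  also have "\<dots> = map_pmf (\<lambda>Y. card {j\<in>{..<N}. Y j \<in> A}) (Pi_pmf {..<N} d (\<lambda>_. p))"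
    by (simp add: pmf.map_comp o_def)
  finally show ?thesis by simp
qed

lemma prob_count:
  "measure_pmf.prob (Pi_pmf {..<N} d (\<lambda>_. p)) {Y. P (real (card {j\<in>{..<N}. Y j \<in> A}))}
     = measure_pmf.prob (binomial_pmf N (measure_pmf.prob p A)) {x. P (real x)}"
  by (subst count_binomial[symmetric]) (simp add: measure_map_pmf vimage_def)



lemma rho_hat_bounds: "0 \<le> rho_hat N Y r" "rho_hat N Y r \<le> 1"
proof -
  have "card {j\<in>{..<N}. Y j = r} \<le> card {..<N}" by (intro card_mono) auto
  thus "0 \<le> rho_hat N Y r" "rho_hat N Y r \<le> 1"
    unfolding rho_hat_def by (auto simp: divide_le_eq_1)
qed

lemma one_minus_tau_hat: "1 - tau_hat R k N Y = (\<Sum>r<R. rho_hat N Y r * (1 - rho_hat N Y r) ^ k)"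
  by (simp add: tau_hat_def tau_def)

lemma one_minus_tau_hat_nonneg: "0 \<le> 1 - tau_hat R k N Y"
  unfolding one_minus_tau_hat using rho_hat_bounds
  by (intro sum_nonneg mult_nonneg_nonneg zero_le_power) auto

lemma card_fibers:
  fixes N :: nat and Y :: "nat \<Rightarrow> nat"
  assumes "finite S"
  shows "real (card {j\<in>{..<N}. Y j \<in> S}) = (\<Sum>r\<in>S. real (card {j\<in>{..<N}. Y j = r}))"
proof -
  have "{j\<in>{..<N}. Y j \<in> S} = (\<Union>r\<in>S. {j\<in>{..<N}. Y j = r})" by auto
  hence "card {j\<in>{..<N}. Y j \<in> S} = (\<Sum>r\<in>S. card {j\<in>{..<N}. Y j = r})"
  proof -
    have fin: "\<And>r. finite {j\<in>{..<N}. Y j = r}" by (rule finite_subset[of _ "{..<N}"]) auto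
    have "card (\<Union>r\<in>S. {j\<in>{..<N}. Y j = r}) = (\<Sum>r\<in>S. card {j\<in>{..<N}. Y j = r})"
      by (rule card_UN_disjoint[OF assms]) (use fin in auto)
    thus ?thesis using \<open>{j\<in>{..<N}. Y j \<in> S} = _\<close> by simp
  qed
  thus ?thesis by simp
qed

lemma det_bound:
  assumes S: "S \<subseteq> {..<R}" and N: "N > 0" and k: "k \<ge> 1"
    and small: "\<And>r. r \<in> S \<Longrightarrow> rho_hat N Y r < 1 / (2 * real k)"
  shows "1 - tau_hat R k N Y \<ge> real (card {j\<in>{..<N}. Y j \<in> S}) / (2 * real N)"
proof -
  have finS: "finite S" using S finite_subset by blast
  have "real (card {j\<in>{..<N}. Y j \<in> S}) / (2 * real N) = (\<Sum>r\<in>S. rho_hat N Y r / 2)"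
    unfolding card_fibers[OF finS] rho_hat_def by (simp add: sum_divide_distrib mult.commute)
  also have "\<dots> \<le> (\<Sum>r\<in>S. rho_hat N Y r * (1 - rho_hat N Y r) ^ k)"
  proof (intro sum_mono)
    fix r assume r: "r \<in> S"
    have "1 + real k * (- rho_hat N Y r) \<le> (1 + - rho_hat N Y r) ^ k"
      using rho_hat_bounds by (intro Bernoulli_inequality) auto
    moreover have "real k * rho_hat N Y r \<le> 1/2"
      using small[OF r] k by (simp add: field_simps)
    ultimately have "1/2 \<le> (1 - rho_hat N Y r) ^ k" by simp
    thus "rho_hat N Y r / 2 \<le> rho_hat N Y r * (1 - rho_hat N Y r) ^ k"
      using rho_hat_bounds[of N Y r] mult_left_mono by fastforce
  qed
  also have "\<dots> \<le> (\<Sum>r<R. rho_hat N Y r * (1 - rho_hat N Y r) ^ k)"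
    using S rho_hat_bounds by (intro sum_mono2) auto
  finally show ?thesis unfolding one_minus_tau_hat .
qed

theorem mainTheorem4:
  fixes R k N :: nat and p :: "nat pmf" and \<Delta> :: real
  assumes "R \<ge> 2"
    and "set_pmf p \<subseteq> {..<R}"
    and "\<And>r. r < R \<Longrightarrow> pmf p r > 0"
    and "k \<ge> 1"
    and "(\<Sum>r\<in>{r\<in>{..<R}. pmf p r \<le> 1 / (4 * real k ^ 2)}. pmf p r * (1 - pmf p r) ^ k)
           \<ge> (1 - tau R k (pmf p)) / 2"
    and "0 < \<Delta>" and "\<Delta> < 1"
    and "real N \<ge> 12 * real k ^ 2 * ln (2 * real R / \<Delta>) + 16 * ln (2 / \<Delta>) / (1 - tau R k (pmf p))"
  shows "measure_pmf.prob (Pi_pmf {..<N} 0 (\<lambda>_. p))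
           {Y. 1 - tau_hat R k N Y \<ge> (1 - tau R k (pmf p)) / 8} \<ge> 1 - \<Delta>"
proof (cases "1 - tau R k (pmf p) \<le> 0")
  case True
  have "1 - tau_hat R k N Y \<ge> (1 - tau R k (pmf p)) / 8" for Y
  proof -
    have "(1 - tau R k (pmf p)) / 8 \<le> 0" using True by simp
    thus ?thesis using one_minus_tau_hat_nonneg[of R k N Y] by (rule order_trans)
  qed
  hence "{Y. 1 - tau_hat R k N Y \<ge> (1 - tau R k (pmf p)) / 8} = UNIV" by blast
  thus ?thesis using assms by simp
next
  case False
  define T where "T = 1 - tau R k (pmf p)"
  have T: "T > 0" using False T_def by simp
  define M where "M = Pi_pmf {..<N} (0::nat) (\<lambda>_. p)"
  define S where "S = {r\<in>{..<R}. pmf p r \<le> 1 / (4 * real k ^ 2)}"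
  define \<mu> where "\<mu> = measure_pmf.prob p S"
  have finS: "finite S" unfolding S_def by simp
  have kpos: "real k \<ge> 1" using assms(4) by simp
  have \<mu>_eq: "\<mu> = (\<Sum>r\<in>S. pmf p r)" unfolding \<mu>_def by (rule measure_measure_pmf_finite[OF finS])
  have \<mu>_ge: "\<mu> \<ge> T / 2"
  proof -
    have "T / 2 \<le> (\<Sum>r\<in>S. pmf p r * (1 - pmf p r) ^ k)" using assms(5) unfolding S_def T_def by simp
    also have "\<dots> \<le> (\<Sum>r\<in>S. pmf p r)"
    proof (intro sum_mono)
      fix r
      have "(1 - pmf p r) ^ k \<le> 1" using pmf_le_1[of p r] pmf_nonneg[of p r]
        by (intro power_le_one) auto
      thus "pmf p r * (1 - pmf p r) ^ k \<le> pmf p r" using pmf_nonneg[of p r]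
        by (simp add: mult_left_le)
    qed
    finally show ?thesis unfolding \<mu>_eq .
  qed
  have lnR: "ln (2 * real R / \<Delta>) > 0" using assms(1,6,7) by (simp add: field_simps)
  have ln2: "ln (2 / \<Delta>) > 0" using assms(6,7) by (simp add: field_simps)
  have t2: "16 * ln (2 / \<Delta>) / T \<ge> 0" using ln2 T by simp
  have t1: "12 * real k ^ 2 * ln (2 * real R / \<Delta>) > 0" using lnR kpos by simp
  have N1: "real N \<ge> 12 * real k ^ 2 * ln (2 * real R / \<Delta>)" using assms(8) t2 unfolding T_def by linarith
  have N2: "real N \<ge> 16 * ln (2 / \<Delta>) / T" using assms(8) t1 unfolding T_def by linarith
  have Npos: "N > 0" using N1 t1 by linarith
  define Bad where "Bad = (\<lambda>r::nat. {Y::nat\<Rightarrow>nat. real (card {j\<in>{..<N}. Y j \<in> {r}}) / real N \<ge> 1 / (2 * real k)})"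
  define C where "C = {Y::nat\<Rightarrow>nat. real (card {j\<in>{..<N}. Y j \<in> S}) \<le> real N * \<mu> / 2}"
  have probBad: "measure_pmf.prob M (Bad r) \<le> \<Delta> / (2 * real R)" if r: "r \<in> S" for r
  proof -
    define q where "q = pmf p r"
    define \<epsilon> where "\<epsilon> = 1 / (2 * real k) - q"
    have q: "0 \<le> q" "q \<le> 1 / (4 * real k ^ 2)" using r unfolding q_def S_def by auto
    have "1 / (4 * real k ^ 2) \<le> 1 / (4 * real k)"
      using kpos by (intro divide_left_mono) (auto simp: power2_eq_square)
    hence eps: "\<epsilon> \<ge> 1 / (4 * real k)" using q unfolding \<epsilon>_def by (simp add: field_simps)
    have q1: "q \<le> 1" unfolding q_def by (rule pmf_le_1)
    have bd: "binomial_distribution q" by unfold_locales (use q q1 in auto)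
    have "measure_pmf.prob M (Bad r) = measure_pmf.prob (binomial_pmf N q) {x. x / real N \<ge> q + \<epsilon>}"
      unfolding M_def Bad_def q_def \<epsilon>_def
      using prob_count[of N 0 p "\<lambda>x. x / real N \<ge> 1 / (2 * real k)" "{r}"]
      by (simp add: measure_pmf_single)
    also have "\<dots> \<le> exp (-2 * real N * \<epsilon>\<^sup>2)"
    proof -
      have "0 \<le> 1 / (4 * real k)" using kpos by simp
      hence "0 \<le> \<epsilon>" using eps by linarith
      thus ?thesis using binomial_distribution.prob_ge'[OF bd Npos, of \<epsilon>] by simp
    qed
    also have "\<dots> \<le> exp (- ln (2 * real R / \<Delta>))"
    proof -
      have "(1 / (4 * real k))^2 \<le> \<epsilon>^2"
        using eps kpos by (intro power_mono) auto
      hence "1 / (16 * real k ^ 2) \<le> \<epsilon>^2" by (simp add: power2_eq_square)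
      hence "real N * (1 / (16 * real k ^ 2)) \<le> real N * \<epsilon>^2"
        by (intro mult_left_mono) auto
      hence "real N / (16 * real k ^ 2) \<le> real N * \<epsilon>^2" by simp
      moreover have "ln (2 * real R / \<Delta>) \<le> real N / (12 * real k ^ 2)"
        using N1 kpos by (simp add: field_simps)
      moreover have "real N / (12 * real k ^ 2) \<le> real N / (16 * real k ^ 2) * 2"
        using kpos by (simp add: field_simps)
      ultimately show ?thesis by simp
    qed
    also have "\<dots> = \<Delta> / (2 * real R)"
      using assms(1,6) by (simp add: exp_minus ln_div exp_diff)
    finally show ?thesis .
  qed
  have probC: "measure_pmf.prob M C \<le> \<Delta> / 2"
  proof -
    have \<mu>01: "0 \<le> \<mu>" "\<mu> \<le> 1" unfolding \<mu>_def by auto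
    have "measure_pmf.prob M C = measure_pmf.prob (binomial_pmf N \<mu>) {x. real x \<le> real N * \<mu> / 2}"
      unfolding M_def C_def \<mu>_def
      using prob_count[of N 0 p "\<lambda>x. x \<le> real N * measure_pmf.prob p S / 2" S] by simp
    also have "\<dots> \<le> exp (- (real N * \<mu> / 8))" by (rule chernoff_lower) (use \<mu>01 in auto)
    also have "\<dots> \<le> exp (- ln (2 / \<Delta>))"
    proof -
      have "16 * ln (2 / \<Delta>) \<le> real N * T" using N2 T by (simp add: field_simps)
      also have "\<dots> \<le> real N * (2 * \<mu>)" using \<mu>_ge by (intro mult_left_mono) auto
      finally show ?thesis by (simp add: mult.commute)
    qed
    also have "\<dots> = \<Delta> / 2" using assms(6) by (simp add: exp_minus ln_div exp_diff)
    finally show ?thesis .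
  qed
  have sub: "UNIV - (C \<union> (\<Union>r\<in>S. Bad r)) \<subseteq> {Y. 1 - tau_hat R k N Y \<ge> T / 8}"
  proof
    fix Y assume Y: "Y \<in> UNIV - (C \<union> (\<Union>r\<in>S. Bad r))"
    have small: "rho_hat N Y r < 1 / (2 * real k)" if "r \<in> S" for r
      using Y that unfolding Bad_def rho_hat_def by auto
    have "T / 8 \<le> \<mu> / 4" using \<mu>_ge by simp
    also have "\<dots> = (real N * \<mu> / 2) / (2 * real N)" using Npos by simp
    also have "\<dots> \<le> real (card {j\<in>{..<N}. Y j \<in> S}) / (2 * real N)"
      using Y Npos unfolding C_def by (intro divide_right_mono) auto
    also have "\<dots> \<le> 1 - tau_hat R k N Y"
      by (rule det_bound[OF _ Npos assms(4) small]) (auto simp: S_def)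
    finally show "Y \<in> {Y. 1 - tau_hat R k N Y \<ge> T / 8}" by simp
  qed
  have "1 - \<Delta> \<le> 1 - (\<Delta> / 2 + real (card S) * (\<Delta> / (2 * real R)))"
  proof -
    have "card S \<le> card {..<R}" unfolding S_def by (intro card_mono) auto
    hence "real (card S) \<le> real R" by simp
    hence "real (card S) * (\<Delta> / (2 * real R)) \<le> real R * (\<Delta> / (2 * real R))"
      using assms(6) by (intro mult_right_mono) auto
    also have "\<dots> = \<Delta> / 2" using assms(1) by simp
    finally show ?thesis by simp
  qed
  also have "\<dots> \<le> 1 - (measure_pmf.prob M C + (\<Sum>r\<in>S. measure_pmf.prob M (Bad r)))"
    using probC sum_mono[of S "\<lambda>r. measure_pmf.prob M (Bad r)" "\<lambda>_. \<Delta> / (2 * real R)"] probBad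
    by simp
  also have "\<dots> \<le> 1 - measure_pmf.prob M (C \<union> (\<Union>r\<in>S. Bad r))"
  proof -
    have "measure_pmf.prob M (C \<union> (\<Union>r\<in>S. Bad r)) \<le> measure_pmf.prob M C + measure_pmf.prob M (\<Union>r\<in>S. Bad r)"
      by (rule measure_Un_le) auto
    also have "measure_pmf.prob M (\<Union>r\<in>S. Bad r) \<le> (\<Sum>r\<in>S. measure_pmf.prob M (Bad r))"
      by (rule measure_pmf.finite_measure_subadditive_finite[OF finS]) auto
    finally show ?thesis by simp
  qed
  also have "\<dots> = measure_pmf.prob M (UNIV - (C \<union> (\<Union>r\<in>S. Bad r)))"
    using measure_pmf.prob_compl[of "C \<union> (\<Union>r\<in>S. Bad r)" M] by simp
  also have "\<dots> \<le> measure_pmf.prob M {Y. 1 - tau_hat R k N Y \<ge> T / 8}"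
    by (rule measure_pmf.finite_measure_mono[OF sub]) auto
  finally show ?thesis unfolding M_def T_def .
qed


end
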